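(* Let $a\ge 1$ and let $v$ be a valuation on a finite set $X$. The following are equivalent: (0) $v$ is $a$-submodular; (1) for every $x\in X$ and $S\subseteq T\subseteq X$ with $x\notin T$, $a\,v(x\mid S)\ge v(x\mid T)$; (2) for every $S,T,V\subseteq X$ with $S\subseteq T$, $a\,v(V\mid S)\ge v(V\mid T)$; (3) for every $A,B\subseteq X$, $v(A)+a\,v(B)\ge v(A\cup B)+a\,v(A\cap B)$.
   Context: A valuation on a finite set $X$ is a function $v:2^X\to\mathbb{R}_{\ge 0}$ with $v(\emptyset)=0$ and monotone under inclusion. The marginal valuation is $v(A\mid W)=v(A\cup W)-v(W)$; $v(x\mid S)$ means $v(\{x\}\mid S)$. A valuation $w$ exhibits $a$-bounded complementarities if $w(A\cup\{x\})\le w(A)+a\,w(\{x\})$ for every set $A$ and item $x$. A valuation $v$ is $a$-submodular if for every $W\subseteq X$ the marginal valuation $v(\cdot\mid W)$ exhibits $a$-bounded complementarities. *)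

theory Defs
  imports Complex_Main
begin

definition valuation :: "'a set \<Rightarrow> ('a set \<Rightarrow> real) \<Rightarrow> bool" where
  "valuation X v \<longleftrightarrow> finite X \<and> v {} = 0 \<and> (\<forall>A. A \<subseteq> X \<longrightarrow> v A \<ge> 0)
     \<and> (\<forall>A B. A \<subseteq> B \<and> B \<subseteq> X \<longrightarrow> v A \<le> v B)"

text \<open>Marginal valuation v(A | W) = v(A \<union> W) - v(W).\<close>
definition marginal :: "('a set \<Rightarrow> real) \<Rightarrow> 'a set \<Rightarrow> 'a set \<Rightarrow> real" where
  "marginal v W A = v (A \<union> W) - v W"

definition bounded_compl :: "real \<Rightarrow> 'a set \<Rightarrow> ('a set \<Rightarrow> real) \<Rightarrow> bool" where
  "bounded_compl a X w \<longleftrightarrow> (\<forall>A x. A \<subseteq> X \<and> x \<in> X \<longrightarrow> w (A \<union> {x}) \<le> w A + a * w {x})"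

definition a_submodular :: "real \<Rightarrow> 'a set \<Rightarrow> ('a set \<Rightarrow> real) \<Rightarrow> bool" where
  "a_submodular a X v \<longleftrightarrow> (\<forall>W. W \<subseteq> X \<longrightarrow> bounded_compl a X (marginal v W))"

end

theory Submission
  imports Defs
begin

definition Qc :: "real \<Rightarrow> 'a set \<Rightarrow> ('a set \<Rightarrow> real) \<Rightarrow> bool" where
  "Qc a X v \<longleftrightarrow> (\<forall>W A x. W \<subseteq> X \<and> A \<subseteq> X \<and> x \<in> X \<longrightarrow>
      v (A \<union> W \<union> {x}) - v (A \<union> W) \<le> a * (v (W \<union> {x}) - v W))"

lemma e: "A \<union> {x} \<union> W = A \<union> W \<union> {x}" "{x} \<union> W = W \<union> {x}" by auto
lemma key: "a_submodular a X v \<longleftrightarrow> Qc a X v"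
  unfolding a_submodular_def bounded_compl_def marginal_def Qc_def e
  by (simp add: algebra_simps) blast

lemma Q_imp_2:
  assumes Q: "Qc a X v" and fin: "finite X" and ST: "S \<subseteq> T" "T \<subseteq> X"
  shows "V \<subseteq> X \<Longrightarrow> a * marginal v S V \<ge> marginal v T V"
proof -
  assume "V \<subseteq> X"
  have "finite V" using \<open>V \<subseteq> X\<close> fin finite_subset by blast
  then show ?thesis using \<open>V \<subseteq> X\<close>
  proof (induction V rule: finite_induct)
    case empty
    then show ?case using ST by (simp add: marginal_def Un_absorb2)
  next
    case (insert x V)
    have IH: "a * (v (V \<union> S) - v S) \<ge> v (V \<union> T) - v T"
      using insert by (simp add: marginal_def)
    have "v (T \<union> (V \<union> S) \<union> {x}) - v (T \<union> (V \<union> S)) \<le> a * (v ((V \<union> S) \<union> {x}) - v (V \<union> S))"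
      using Q[unfolded Qc_def, rule_format, of "V \<union> S" T x] insert.prems ST by auto
    moreover have "T \<union> (V \<union> S) = V \<union> T" using ST by auto
    ultimately have "v (V \<union> T \<union> {x}) - v (V \<union> T) \<le> a * (v (V \<union> S \<union> {x}) - v (V \<union> S))"
      by metis
    moreover have "insert x V \<union> S = V \<union> S \<union> {x}" "insert x V \<union> T = V \<union> T \<union> {x}" by auto
    ultimately show ?case using IH by (simp add: marginal_def algebra_simps)
  qed
qed

theorem proposition5:
  fixes a :: real and X :: "'a set" and v :: "'a set \<Rightarrow> real"
  assumes "a \<ge> 1" and "valuation X v"
  shows "(a_submodular a X v
          \<longleftrightarrow> (\<forall>x S T. x \<in> X \<and> S \<subseteq> T \<and> T \<subseteq> X \<and> x \<notin> T
                 \<longrightarrow> a * marginal v S {x} \<ge> marginal v T {x}))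
       \<and> (a_submodular a X v
          \<longleftrightarrow> (\<forall>S T V. S \<subseteq> T \<and> T \<subseteq> X \<and> V \<subseteq> X
                 \<longrightarrow> a * marginal v S V \<ge> marginal v T V))
       \<and> (a_submodular a X v
          \<longleftrightarrow> (\<forall>A B. A \<subseteq> X \<and> B \<subseteq> X
                 \<longrightarrow> v A + a * v B \<ge> v (A \<union> B) + a * v (A \<inter> B)))"
proof -
  have fin: "finite X" and mono: "\<And>A B. A \<subseteq> B \<Longrightarrow> B \<subseteq> X \<Longrightarrow> v A \<le> v B"
    using assms(2) unfolding valuation_def by auto
  have a0: "a \<ge> 0" using assms(1) by simp
  define P1 where "P1 = (\<forall>x S T. x \<in> X \<and> S \<subseteq> T \<and> T \<subseteq> X \<and> x \<notin> T
                 \<longrightarrow> a * marginal v S {x} \<ge> marginal v T {x})"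
  define P2 where "P2 = (\<forall>S T V. S \<subseteq> T \<and> T \<subseteq> X \<and> V \<subseteq> X
                 \<longrightarrow> a * marginal v S V \<ge> marginal v T V)"
  define P3 where "P3 = (\<forall>A B. A \<subseteq> X \<and> B \<subseteq> X
                 \<longrightarrow> v A + a * v B \<ge> v (A \<union> B) + a * v (A \<inter> B))"
  have triv: "v (A \<union> W \<union> {x}) - v (A \<union> W) \<le> a * (v (W \<union> {x}) - v W)"
    if "x \<in> A \<union> W" "W \<subseteq> X" "x \<in> X" for A W x
  proof -
    have "A \<union> W \<union> {x} = A \<union> W" using that by auto
    moreover have "v W \<le> v (W \<union> {x})" using mono[of W "W \<union> {x}"] that by auto
    ultimately show ?thesis using a0 by simp
  qed
  have Q1: "Qc a X v \<Longrightarrow> P1"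
    unfolding P1_def marginal_def Qc_def
  proof (intro allI impI)
    fix x S T assume Q: "\<forall>W A x. W \<subseteq> X \<and> A \<subseteq> X \<and> x \<in> X \<longrightarrow>
      v (A \<union> W \<union> {x}) - v (A \<union> W) \<le> a * (v (W \<union> {x}) - v W)"
      and h: "x \<in> X \<and> S \<subseteq> T \<and> T \<subseteq> X \<and> x \<notin> T"
    then have "v (T \<union> S \<union> {x}) - v (T \<union> S) \<le> a * (v (S \<union> {x}) - v S)"
      using Q[rule_format, of S T x] h by auto
    moreover have "T \<union> S = T" using h by auto
    ultimately show "v ({x} \<union> T) - v T \<le> a * (v ({x} \<union> S) - v S)" by (simp add: Un_commute)
  qed
  have P1Q: "P1 \<Longrightarrow> Qc a X v"
    unfolding Qc_def
  proof (intro allI impI)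
    fix W A x assume p: P1 and h: "W \<subseteq> X \<and> A \<subseteq> X \<and> x \<in> X"
    show "v (A \<union> W \<union> {x}) - v (A \<union> W) \<le> a * (v (W \<union> {x}) - v W)"
    proof (cases "x \<in> A \<union> W")
      case True then show ?thesis using triv h by blast
    next
      case False
      then have "a * marginal v W {x} \<ge> marginal v (A \<union> W) {x}" using p[unfolded P1_def, rule_format, of x W "A \<union> W"] h by auto
      then show ?thesis by (simp add: marginal_def Un_commute)
    qed
  qed
  have Q2: "Qc a X v \<Longrightarrow> P2" unfolding P2_def using Q_imp_2[OF _ fin] by auto
  have P21: "P2 \<Longrightarrow> P1" unfolding P2_def P1_def
  proof (intro allI impI)
    fix x S T assume p: "\<forall>S T V. S \<subseteq> T \<and> T \<subseteq> X \<and> V \<subseteq> X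
                 \<longrightarrow> a * marginal v S V \<ge> marginal v T V" and h: "x \<in> X \<and> S \<subseteq> T \<and> T \<subseteq> X \<and> x \<notin> T"
    then show "a * marginal v S {x} \<ge> marginal v T {x}" by simp
  qed
  have P23: "P2 \<Longrightarrow> P3" unfolding P3_def
  proof (intro allI impI)
    fix A B assume p: P2 and h: "A \<subseteq> X \<and> B \<subseteq> X"
    then have "a * marginal v (A \<inter> B) B \<ge> marginal v A B" using p[unfolded P2_def, rule_format, of "A \<inter> B" A B] h by auto
    moreover have "B \<union> (A \<inter> B) = B" by auto
    ultimately show "v A + a * v B \<ge> v (A \<union> B) + a * v (A \<inter> B)"
      by (simp add: marginal_def algebra_simps Un_commute)
  qed
  have P3Q: "P3 \<Longrightarrow> Qc a X v" unfolding Qc_def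
  proof (intro allI impI)
    fix W A x assume p: P3 and h: "W \<subseteq> X \<and> A \<subseteq> X \<and> x \<in> X"
    show "v (A \<union> W \<union> {x}) - v (A \<union> W) \<le> a * (v (W \<union> {x}) - v W)"
    proof (cases "x \<in> A \<union> W")
      case True then show ?thesis using triv h by blast
    next
      case False
      have "v (A \<union> W) + a * v (W \<union> {x}) \<ge> v ((A \<union> W) \<union> (W \<union> {x})) + a * v ((A \<union> W) \<inter> (W \<union> {x}))"
        using p[unfolded P3_def, rule_format, of "A \<union> W" "W \<union> {x}"] h by auto
      moreover have "(A \<union> W) \<union> (W \<union> {x}) = A \<union> W \<union> {x}" by auto
      moreover have "(A \<union> W) \<inter> (W \<union> {x}) = W" using False by auto
      ultimately show ?thesis by (simp add: algebra_simps)
    qed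
  qed
  show ?thesis unfolding P1_def[symmetric] P2_def[symmetric] P3_def[symmetric] key
    using Q1 P1Q Q2 P21 P23 P3Q by (meson iffI)
qed

end
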